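(* Let $N=\ker\psi\subseteq G_3$. Then $\beta(N)\supseteq A_{12}$, the alternating group on the twelve edge positions.
   Context: The $3\times3\times3$ Rubik's cube consists of 8 corner cubelets (3 stickers each), 12 edge cubelets (2 stickers each) and 6 face-center cubelets. $G_3$ is the group of permutations of the 48 corner and edge stickers generated by the six moves $u_3,d_3,f_3,b_3,l_3,r_3$ rotating respectively the top, bottom, front, back, left, right layer of nine cubelets by $90^\circ$ clockwise as seen from outside facing that face. $G_2$ is the analogous group for the $2\times2\times2$ cube (8 corner cubelets, 24 stickers) with generators $u_2,\dots,r_2$, and $\psi:G_3\to G_2$ is the homomorphism with $u_3\mapsto u_2$, $d_3\mapsto d_2$, etc. (it records the action on corner stickers). $\beta:G_3\to S_{12}$ records the permutation of the 12 edge positions. *)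

theory Defs
  imports Main "HOL-Combinatorics.Permutations"
begin

text \<open>Cubelet positions are integer vectors in
{-1,0,1}^3 (x = right, y = up, z = front). A sticker is a pair (position, outward
normal of the face of the cubelet carrying it), the normal being a signed unit
axis vector.\<close>

type_synonym vec = "int \<times> int \<times> int"
type_synonym sticker = "vec \<times> vec"

fun dot :: "vec \<Rightarrow> vec \<Rightarrow> int" where
  "dot (a1, a2, a3) (b1, b2, b3) = a1 * b1 + a2 * b2 + a3 * b3"

fun cross :: "vec \<Rightarrow> vec \<Rightarrow> vec" where
  "cross (a1, a2, a3) (b1, b2, b3) = (a2 * b3 - a3 * b2, a3 * b1 - a1 * b3, a1 * b2 - a2 * b1)"

fun scale :: "int \<Rightarrow> vec \<Rightarrow> vec" where
  "scale c (a1, a2, a3) = (c * a1, c * a2, c * a3)"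

fun vadd :: "vec \<Rightarrow> vec \<Rightarrow> vec" where
  "vadd (a1, a2, a3) (b1, b2, b3) = (a1 + b1, a2 + b2, a3 + b3)"

fun nz :: "vec \<Rightarrow> nat" where
  "nz (a1, a2, a3) = (if a1 \<noteq> 0 then 1 else 0) + (if a2 \<noteq> 0 then 1 else 0) + (if a3 \<noteq> 0 then 1 else 0)"

definition Pos :: "vec set" where
  "Pos = {(x, y, z). x \<in> {-1, 0, 1} \<and> y \<in> {-1, 0, 1} \<and> z \<in> {-1, 0, 1}}"

definition Axes :: "vec set" where
  "Axes = {(1,0,0), (-1,0,0), (0,1,0), (0,-1,0), (0,0,1), (0,0,-1)}"

text \<open>Corner stickers (24) and edge stickers (24): the face normal points in the
direction of a nonzero coordinate of the cubelet position.\<close>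
definition CornerStickers :: "sticker set" where
  "CornerStickers = {(p, d). p \<in> Pos \<and> nz p = 3 \<and> d \<in> Axes \<and> dot p d = 1}"

definition EdgeStickers :: "sticker set" where
  "EdgeStickers = {(p, d). p \<in> Pos \<and> nz p = 2 \<and> d \<in> Axes \<and> dot p d = 1}"

definition Stickers :: "sticker set" where
  "Stickers = CornerStickers \<union> EdgeStickers"

definition EdgePos :: "vec set" where
  "EdgePos = {p \<in> Pos. nz p = 2}"

text \<open>Rotation by 90 degrees clockwise as seen from outside, looking at the face with
outward normal n (i.e. by -90 degrees about n): v \<mapsto> (v.n) n + v \<times> n.\<close>
definition rot :: "vec \<Rightarrow> vec \<Rightarrow> vec" where
  "rot n v = vadd (scale (dot v n) n) (cross v n)"

definition turn :: "sticker set \<Rightarrow> vec \<Rightarrow> sticker \<Rightarrow> sticker" where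
  "turn S n s = (if s \<in> S \<and> dot (fst s) n = 1 then (rot n (fst s), rot n (snd s)) else s)"

definition nU :: vec where "nU = (0, 1, 0)"
definition nD :: vec where "nD = (0, -1, 0)"
definition nF :: vec where "nF = (0, 0, 1)"
definition nB :: vec where "nB = (0, 0, -1)"
definition nL :: vec where "nL = (-1, 0, 0)"
definition nR :: vec where "nR = (1, 0, 0)"

inductive_set gen_group :: "('a \<Rightarrow> 'a) set \<Rightarrow> ('a \<Rightarrow> 'a) set" for gs where
  gen_id: "id \<in> gen_group gs"
| gen_mult: "g \<in> gen_group gs \<Longrightarrow> m \<in> gs \<Longrightarrow> m \<circ> g \<in> gen_group gs"
| gen_inv: "g \<in> gen_group gs \<Longrightarrow> m \<in> gs \<Longrightarrow> inv m \<circ> g \<in> gen_group gs"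

definition u3 where "u3 = turn Stickers nU"
definition d3 where "d3 = turn Stickers nD"
definition f3 where "f3 = turn Stickers nF"
definition b3 where "b3 = turn Stickers nB"
definition l3 where "l3 = turn Stickers nL"
definition r3 where "r3 = turn Stickers nR"

definition G3 :: "(sticker \<Rightarrow> sticker) set" where
  "G3 = gen_group {u3, d3, f3, b3, l3, r3}"

text \<open>The 2x2x2 cube: its 24 stickers are identified with the corner stickers.\<close>
definition u2 where "u2 = turn CornerStickers nU"
definition d2 where "d2 = turn CornerStickers nD"
definition f2 where "f2 = turn CornerStickers nF"
definition b2 where "b2 = turn CornerStickers nB"
definition l2 where "l2 = turn CornerStickers nL"
definition r2 where "r2 = turn CornerStickers nR"

definition G2 :: "(sticker \<Rightarrow> sticker) set" where
  "G2 = gen_group {u2, d2, f2, b2, l2, r2}"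

text \<open>psi : G3 \<rightarrow> G2 records the action on the corner stickers
(so psi u3 = u2, etc.).\<close>
definition psi :: "(sticker \<Rightarrow> sticker) \<Rightarrow> (sticker \<Rightarrow> sticker)" where
  "psi g = (\<lambda>s. if s \<in> CornerStickers then g s else s)"

text \<open>beta : G3 \<rightarrow> Sym(EdgePos) records the permutation of the 12 edge positions:
the edge cubelet at position p is sent to the position of the image of any of its
stickers.\<close>
definition beta :: "(sticker \<Rightarrow> sticker) \<Rightarrow> (vec \<Rightarrow> vec)" where
  "beta g = (\<lambda>p. if p \<in> EdgePos then fst (g (p, SOME d. (p, d) \<in> EdgeStickers)) else p)"

definition kerPsi :: "(sticker \<Rightarrow> sticker) set" where
  "kerPsi = {g \<in> G3. psi g = id}"

definition A12 :: "(vec \<Rightarrow> vec) set" where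
  "A12 = {\<sigma>. \<sigma> permutes EdgePos \<and> evenperm \<sigma>}"

end

theory Submission
  imports Defs
begin


definition cyc3 :: "'a \<Rightarrow> 'a \<Rightarrow> 'a \<Rightarrow> 'a \<Rightarrow> 'a" where
  "cyc3 a b c = (\<lambda>x. if x = a then b else if x = b then c else if x = c then a else x)"

lemma cyc3_swaps: "distinct [a,b,c] \<Longrightarrow> cyc3 a b c = transpose a b \<circ> transpose b c"
  by (auto simp: cyc3_def fun_eq_iff transpose_def)

lemma cyc3_permutes: "distinct [a,b,c] \<Longrightarrow> {a,b,c} \<subseteq> S \<Longrightarrow> cyc3 a b c permutes S"
  by (simp add: cyc3_swaps permutes_compose permutes_swap_id)

lemma cyc3_perm: "distinct [a,b,c] \<Longrightarrow> permutation (cyc3 a b c)"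
  by (simp add: cyc3_swaps permutation_compose permutation_swap_id)

lemma cyc3_even: "distinct [a,b,c] \<Longrightarrow> evenperm (cyc3 a b c)"
  by (simp add: cyc3_swaps evenperm_comp permutation_swap_id evenperm_swap)

lemma cyc3_rot: "cyc3 x y z = cyc3 y z x" if "distinct [x,y,z]"
  using that by (auto simp: cyc3_def fun_eq_iff)

lemma cyc3_sq: "distinct [a,b,c] \<Longrightarrow> cyc3 a c b = cyc3 a b c \<circ> cyc3 a b c"
  by (auto simp: cyc3_def fun_eq_iff)

lemma cyc3_pat: "distinct [p,q,r,s] \<Longrightarrow> cyc3 p q r = cyc3 p s r \<circ> cyc3 p q s"
  by (auto simp: cyc3_def fun_eq_iff)

lemma alt_gen:
  fixes H :: "('a \<Rightarrow> 'a) set"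
  assumes fin: "finite S" and cl: "\<And>x y. x \<in> H \<Longrightarrow> y \<in> H \<Longrightarrow> x \<circ> y \<in> H"
    and idH: "id \<in> H"
    and c3: "\<And>a b c. distinct [a,b,c] \<Longrightarrow> {a,b,c} \<subseteq> S \<Longrightarrow> cyc3 a b c \<in> H"
  shows "\<sigma> permutes S \<Longrightarrow> evenperm \<sigma> \<Longrightarrow> \<sigma> \<in> H"
proof (induction "card {x. \<sigma> x \<noteq> x}" arbitrary: \<sigma> rule: less_induct)
  case less
  note perm = less.prems(1) and ev = less.prems(2)
  have inj: "inj \<sigma>" using perm permutes_inj by blast
  have pp: "permutation \<sigma>" using perm fin permutes_imp_permutation by blast
  have finsupp: "finite {x. \<sigma> x \<noteq> x}"
    using perm fin by (metis (mono_tags, lifting) finite_subset mem_Collect_eq permutes_not_in subsetI)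
  show ?case
  proof (cases "\<sigma> = id")
    case True then show ?thesis using idH by simp
  next
    case False
    then obtain a where a: "\<sigma> a \<noteq> a" by (auto simp: fun_eq_iff)
    define b where "b = \<sigma> a"
    define c where "c = \<sigma> b"
    have aS: "a \<in> S" using a perm permutes_not_in by metis
    have bS: "b \<in> S" using aS perm b_def permutes_in_image by metis
    have cS: "c \<in> S" using bS perm c_def permutes_in_image by metis
    have ab: "a \<noteq> b" using a b_def by simp
    have bc: "b \<noteq> c" using inj ab b_def c_def by (metis injD)
    show ?thesis
    proof (cases "c = a")
      case False
      define \<tau> where "\<tau> = cyc3 c b a \<circ> \<sigma>"
      have d: "distinct [c,b,a]" "distinct [a,b,c]" using False ab bc by auto
      have tp: "\<tau> permutes S" unfolding \<tau>_def
        using aS bS cS by (intro permutes_compose[OF perm] cyc3_permutes[OF d(1)]) auto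
      have tev: "evenperm \<tau>" unfolding \<tau>_def
        using ev cyc3_even[OF d(1)] evenperm_comp[OF cyc3_perm[OF d(1)] pp] by simp
      have sub: "{x. \<tau> x \<noteq> x} \<subseteq> {x. \<sigma> x \<noteq> x} - {a}"
      proof
        fix x assume "x \<in> {x. \<tau> x \<noteq> x}"
        then have tx: "\<tau> x \<noteq> x" by simp
        have "x \<noteq> a" using tx d unfolding \<tau>_def cyc3_def b_def by auto
        moreover have "\<sigma> x \<noteq> x"
        proof
          assume sx: "\<sigma> x = x"
          have "x \<noteq> a" using sx a by auto
          moreover have "x \<noteq> b" using sx ab b_def inj by (metis injD)
          moreover have "x \<noteq> c" using sx bc c_def inj by (metis injD)
          ultimately show False using tx sx unfolding \<tau>_def cyc3_def by auto
        qed
        ultimately show "x \<in> {x. \<sigma> x \<noteq> x} - {a}" by simp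
      qed
      have "{x. \<tau> x \<noteq> x} \<subset> {x. \<sigma> x \<noteq> x}" using sub a by blast
      then have "card {x. \<tau> x \<noteq> x} < card {x. \<sigma> x \<noteq> x}"
        by (rule psubset_card_mono[OF finsupp])
      then have tH: "\<tau> \<in> H" using less.hyps tp tev by blast
      have "\<sigma> = cyc3 a b c \<circ> \<tau>" unfolding \<tau>_def
        using d by (auto simp: fun_eq_iff cyc3_def)
      then show ?thesis using cl[OF c3[OF d(2)] tH] aS bS cS by simp
    next
      case True
      have "\<exists>d. \<sigma> d \<noteq> d \<and> d \<noteq> a \<and> d \<noteq> b"
      proof (rule ccontr)
        assume H: "\<not> (\<exists>d. \<sigma> d \<noteq> d \<and> d \<noteq> a \<and> d \<noteq> b)"
        have "\<sigma> x = transpose a b x" for x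
        proof -
          consider "x = a" | "x = b" | "x \<noteq> a" "x \<noteq> b" by blast
          then show ?thesis
          proof cases
            case 1 then show ?thesis using b_def by simp
          next
            case 2 then show ?thesis using True c_def by simp
          next
            case 3 then show ?thesis using H by auto
          qed
        qed
        then have "\<sigma> = transpose a b" by (simp add: fun_eq_iff)
        then show False using ev ab by (simp add: evenperm_swap)
      qed
      then obtain d where d: "\<sigma> d \<noteq> d" "d \<noteq> a" "d \<noteq> b" by blast
      define e where "e = \<sigma> d"
      have dS: "d \<in> S" using d perm permutes_not_in by metis
      have eS: "e \<in> S" using dS perm e_def permutes_in_image by metis
      have ea: "e \<noteq> a"
      proof
        assume "e = a" then have "\<sigma> d = \<sigma> b" using True c_def e_def by simp
        then show False using inj d(3) by (simp add: inj_eq)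
      qed
      have eb: "e \<noteq> b"
      proof
        assume "e = b" then have "\<sigma> d = \<sigma> a" using b_def e_def by simp
        then show False using inj d(2) by (simp add: inj_eq)
      qed
      have de: "d \<noteq> e" using d e_def by simp
      define \<kappa> where "\<kappa> = cyc3 a d b \<circ> cyc3 a d e"
      have d1: "distinct [a,d,b]" "distinct [a,d,e]" using d ab ea eb de by auto
      have kp: "\<kappa> permutes S" unfolding \<kappa>_def
        using aS bS dS eS by (intro permutes_compose cyc3_permutes d1) auto
      have kpp: "permutation \<kappa>" unfolding \<kappa>_def
        by (intro permutation_compose cyc3_perm d1)
      have kev: "evenperm \<kappa>" unfolding \<kappa>_def
        using cyc3_even[OF d1(1)] cyc3_even[OF d1(2)] evenperm_comp[OF cyc3_perm[OF d1(1)] cyc3_perm[OF d1(2)]] by simp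
      have kH: "\<kappa> \<in> H" unfolding \<kappa>_def
        using cl[OF c3[OF d1(1)] c3[OF d1(2)]] aS bS dS eS by simp
      have kk: "\<kappa> = (\<lambda>x. if x = a then b else if x = b then a else if x = d then e
                         else if x = e then d else x)"
        unfolding \<kappa>_def using d1 ab ea eb de by (auto simp: fun_eq_iff cyc3_def)
      define \<tau> where "\<tau> = \<kappa> \<circ> \<sigma>"
      have tp: "\<tau> permutes S" unfolding \<tau>_def by (rule permutes_compose[OF perm kp])
      have tev: "evenperm \<tau>" unfolding \<tau>_def
        using ev kev evenperm_comp[OF kpp pp] by simp
      have sub: "{x. \<tau> x \<noteq> x} \<subseteq> {x. \<sigma> x \<noteq> x} - {a}"
      proof
        fix x assume "x \<in> {x. \<tau> x \<noteq> x}"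
        then have tx: "\<tau> x \<noteq> x" by simp
        have "\<tau> a = \<kappa> b" unfolding \<tau>_def b_def by simp
        also have "\<kappa> b = a" using ab unfolding kk by auto
        finally have "\<tau> a = a" .
        then have "x \<noteq> a" using tx by auto
        moreover have "\<sigma> x \<noteq> x"
        proof
          assume sx: "\<sigma> x = x"
          have "x \<noteq> a" using sx a by auto
          moreover have "x \<noteq> b" using sx ab b_def inj by (metis injD)
          moreover have "x \<noteq> d" using sx d by auto
          moreover have "x \<noteq> e" using sx de e_def inj by (metis injD)
          ultimately show False using tx sx unfolding \<tau>_def kk by auto
        qed
        ultimately show "x \<in> {x. \<sigma> x \<noteq> x} - {a}" by simp
      qed
      have "{x. \<tau> x \<noteq> x} \<subset> {x. \<sigma> x \<noteq> x}" using sub a by blast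
      then have "card {x. \<tau> x \<noteq> x} < card {x. \<sigma> x \<noteq> x}"
        by (rule psubset_card_mono[OF finsupp])
      then have tH: "\<tau> \<in> H" using less.hyps tp tev by blast
      have kk2: "\<kappa> (\<kappa> y) = y" for y using ab de ea eb d(2,3) unfolding kk by auto
      have "\<sigma> = \<kappa> \<circ> \<tau>" unfolding \<tau>_def by (simp add: fun_eq_iff kk2)
      then show ?thesis using cl[OF kH tH] by simp
    qed
  qed
qed

lemma all_c3:
  fixes H :: "('a \<Rightarrow> 'a) set"
  assumes cl: "\<And>x y. x \<in> H \<Longrightarrow> y \<in> H \<Longrightarrow> x \<circ> y \<in> H"
    and ab: "a \<noteq> b" "a \<in> S" "b \<in> S"
    and fam: "\<And>k. k \<in> S \<Longrightarrow> k \<noteq> a \<Longrightarrow> k \<noteq> b \<Longrightarrow> cyc3 a b k \<in> H"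
    and xyz: "distinct [x,y,z]" "{x,y,z} \<subseteq> S"
  shows "cyc3 x y z \<in> H"
proof -
  have A1: "cyc3 a b k \<in> H" if "k \<in> S" "k \<noteq> a" "k \<noteq> b" for k
    using fam[OF that] .
  have A2: "cyc3 a k b \<in> H" if "k \<in> S" "k \<noteq> a" "k \<noteq> b" for k
  proof -
    have "cyc3 a k b = cyc3 a b k \<circ> cyc3 a b k" using that ab by (intro cyc3_sq) auto
    then show ?thesis using cl[OF A1[OF that] A1[OF that]] by simp
  qed
  have B: "cyc3 a y z \<in> H" if "distinct [a,y,z]" "y \<in> S" "z \<in> S" for y z
  proof -
    consider "y = b" | "z = b" | "y \<noteq> b" "z \<noteq> b" by blast
    then show ?thesis
    proof cases
      case 1 then show ?thesis using A1 that by auto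
    next
      case 2 then show ?thesis using A2 that by auto
    next
      case 3
      then have e: "cyc3 a y z = cyc3 a b z \<circ> cyc3 a y b" using that ab by (intro cyc3_pat) auto
      have "cyc3 a b z \<in> H" using A1 that 3 by auto
      moreover have "cyc3 a y b \<in> H" using A2 that 3 by auto
      ultimately show ?thesis using cl e by metis
    qed
  qed
  have C: "cyc3 b y z \<in> H" if "distinct [b,y,z]" "y \<in> S" "z \<in> S" for y z
  proof -
    consider "y = a" | "z = a" | "y \<noteq> a" "z \<noteq> a" by blast
    then show ?thesis
    proof cases
      case 1
      then have "cyc3 b y z = cyc3 y z b" using that by (intro cyc3_rot) auto
      then show ?thesis using A2 that 1 ab by auto
    next
      case 2
      then have "cyc3 b y z = cyc3 z b y" using that cyc3_rot[of b y z] cyc3_rot[of y z b] by auto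
      then show ?thesis using A1 that 2 ab by auto
    next
      case 3
      then have e: "cyc3 b y z = cyc3 b a z \<circ> cyc3 b y a" using that ab by (intro cyc3_pat) auto
      have "cyc3 b a z = cyc3 a z b" using that ab 3 by (intro cyc3_rot) auto
      then have h1: "cyc3 b a z \<in> H" using A2 that 3 by auto
      have "cyc3 b y a = cyc3 a b y" using that ab 3 cyc3_rot[of b y a] cyc3_rot[of y a b] by auto
      then have h2: "cyc3 b y a \<in> H" using A1 that 3 by auto
      show ?thesis using cl[OF h1 h2] e by simp
    qed
  qed
  have xS: "x \<in> S" "y \<in> S" "z \<in> S" using xyz by auto
  consider "x = a" | "y = a" | "z = a" | "a \<notin> {x,y,z}" by blast
  then show ?thesis
  proof cases
    case 1 then show ?thesis using B xyz xS by auto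
  next
    case 2
    then have "cyc3 x y z = cyc3 y z x" using xyz by (intro cyc3_rot) auto
    then show ?thesis using B[of z x] xyz xS 2 by auto
  next
    case 3
    then have "cyc3 x y z = cyc3 z x y" using xyz cyc3_rot[of x y z] cyc3_rot[of y z x] by auto
    then show ?thesis using B[of x y] xyz xS 3 by auto
  next
    case 4
    then have e: "cyc3 x y z = cyc3 x a z \<circ> cyc3 x y a" using xyz by (intro cyc3_pat) auto
    have "cyc3 x a z = cyc3 a z x" using xyz 4 by (intro cyc3_rot) auto
    then have h1: "cyc3 x a z \<in> H" using B[of z x] xyz xS 4 by auto
    have "cyc3 x y a = cyc3 a x y" using xyz 4 cyc3_rot[of x y a] cyc3_rot[of y a x] by auto
    then have h2: "cyc3 x y a \<in> H" using B[of x y] xyz xS 4 by auto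
    show ?thesis using cl[OF h1 h2] e by simp
  qed
qed



lemma rot_cases: "n \<in> Axes \<Longrightarrow> rot n (x,y,z) \<in> {(x,-z,y),(x,z,-y),(-z,y,x),(z,y,-x),(y,-x,z),(-y,x,z)}"
  by (auto simp: Axes_def rot_def)

lemma rot4: "n \<in> Axes \<Longrightarrow> rot n (rot n (rot n (rot n v))) = v"
  by (cases v) (auto simp: Axes_def rot_def)

lemma rot_dot: "n \<in> Axes \<Longrightarrow> dot (rot n v) n = dot v n"
  by (cases v) (auto simp: Axes_def rot_def)

lemma rot_dot2: "n \<in> Axes \<Longrightarrow> dot (rot n v) (rot n w) = dot v w"
  by (cases v; cases w) (auto simp: Axes_def rot_def algebra_simps)

lemma rot_Axes: "n \<in> Axes \<Longrightarrow> d \<in> Axes \<Longrightarrow> rot n d \<in> Axes"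
  by (auto simp: Axes_def rot_def)

lemma rot_Pos: "n \<in> Axes \<Longrightarrow> p \<in> Pos \<Longrightarrow> rot n p \<in> Pos"
  by (cases p) (auto simp: Axes_def rot_def Pos_def)

lemma rot_nz: "n \<in> Axes \<Longrightarrow> nz (rot n p) = nz p"
  by (cases p) (auto simp: Axes_def rot_def)

lemma rot_ES: "n \<in> Axes \<Longrightarrow> (p,d) \<in> EdgeStickers \<Longrightarrow> (rot n p, rot n d) \<in> EdgeStickers"
  by (auto simp: EdgeStickers_def rot_Pos rot_nz rot_Axes rot_dot2)

lemma rot_CS: "n \<in> Axes \<Longrightarrow> (p,d) \<in> CornerStickers \<Longrightarrow> (rot n p, rot n d) \<in> CornerStickers"
  by (auto simp: CornerStickers_def rot_Pos rot_nz rot_Axes rot_dot2)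

lemma rot_St: "n \<in> Axes \<Longrightarrow> s \<in> Stickers \<Longrightarrow> (rot n (fst s), rot n (snd s)) \<in> Stickers"
  by (cases s) (auto simp: Stickers_def rot_ES rot_CS)

lemma turn4: assumes n: "n \<in> Axes"
  shows "turn Stickers n (turn Stickers n (turn Stickers n (turn Stickers n s))) = s"
proof (cases "s \<in> Stickers \<and> dot (fst s) n = 1")
  case True
  obtain p d where s: "s = (p,d)" by (cases s) blast
  have 1: "(rot n p, rot n d) \<in> Stickers" using rot_St[OF n, of s] True s by simp
  have 2: "(rot n (rot n p), rot n (rot n d)) \<in> Stickers" using rot_St[OF n 1] by simp
  have 3: "(rot n (rot n (rot n p)), rot n (rot n (rot n d))) \<in> Stickers" using rot_St[OF n 2] by simp
  show ?thesis using True 1 2 3 n unfolding s by (simp add: turn_def rot_dot rot4)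
next
  case False
  then have "turn Stickers n s = s" unfolding turn_def by auto
  then show ?thesis by simp
qed

lemma turn_ES: assumes n: "n \<in> Axes" and s: "(p,d) \<in> EdgeStickers"
  shows "turn Stickers n (p,d) \<in> EdgeStickers"
    "fst (turn Stickers n (p,d)) = (if dot p n = 1 then rot n p else p)"
  using s rot_ES[OF n s] by (auto simp: turn_def Stickers_def)

definition gens :: "(sticker \<Rightarrow> sticker) set" where "gens = {u3, d3, f3, b3, l3, r3}"

lemma gens_turn: "m \<in> gens \<Longrightarrow> \<exists>n\<in>Axes. m = turn Stickers n"
  by (auto simp: gens_def u3_def d3_def f3_def b3_def l3_def r3_def
      nU_def nD_def nF_def nB_def nL_def nR_def Axes_def)

lemma gen4: "m \<in> gens \<Longrightarrow> m (m (m (m s))) = s"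
  using gens_turn turn4 by metis

lemma gen_inv_eq: assumes "m \<in> gens" shows "inv m = m \<circ> m \<circ> m"
  by (rule inv_unique_comp) (auto simp: fun_eq_iff gen4[OF assms])

lemma G3_comp: "g \<in> G3 \<Longrightarrow> h \<in> G3 \<Longrightarrow> g \<circ> h \<in> G3"
  unfolding G3_def
proof (induction g rule: gen_group.induct)
  case gen_id then show ?case by simp
next
  case (gen_mult g m)
  then have "g \<circ> h \<in> gen_group {u3, d3, f3, b3, l3, r3}" by (simp add: comp_def)
  from gen_group.gen_mult[OF this gen_mult.hyps(2)] show ?case by (metis comp_assoc)
next
  case (gen_inv g m)
  then have "g \<circ> h \<in> gen_group {u3, d3, f3, b3, l3, r3}" by (simp add: comp_def)
  from gen_group.gen_inv[OF this gen_inv.hyps(2)] show ?case by (metis comp_assoc)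
qed

lemma G3_ind:
  assumes "g \<in> G3" "P id" "\<And>g m. P g \<Longrightarrow> m \<in> gens \<Longrightarrow> P (m \<circ> g)"
  shows "P g"
  using assms(1) unfolding G3_def
proof (induction g rule: gen_group.induct)
  case gen_id then show ?case using assms(2) by (simp add: id_def)
next
  case (gen_mult g m)
  then have "m \<in> gens" using gens_def by simp
  then show ?case using assms(3) gen_mult.IH by blast
next
  case (gen_inv g m)
  then have m: "m \<in> gens" using gens_def by simp
  have "inv m \<circ> g = m \<circ> (m \<circ> (m \<circ> g))" using gen_inv_eq[OF m] by (simp add: comp_assoc)
  then show ?case using assms(3)[OF assms(3)[OF assms(3)[OF gen_inv.IH m] m] m] by metis
qed

definition Q :: "(sticker \<Rightarrow> sticker) \<Rightarrow> bool" where
  "Q g \<longleftrightarrow> (\<forall>p d. (p,d) \<in> EdgeStickers \<longrightarrow> g (p,d) \<in> EdgeStickers) \<and>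
     (\<forall>p d d'. (p,d) \<in> EdgeStickers \<longrightarrow> (p,d') \<in> EdgeStickers \<longrightarrow> fst (g (p,d)) = fst (g (p,d')))"

lemma Q_gen: "m \<in> gens \<Longrightarrow> Q m"
  using gens_turn turn_ES unfolding Q_def by metis

lemma Q_comp: assumes "Q f" "Q g" shows "Q (f \<circ> g)"
  unfolding Q_def
proof (intro conjI allI impI)
  fix p d assume "(p,d) \<in> EdgeStickers"
  then show "(f \<circ> g) (p,d) \<in> EdgeStickers" using assms unfolding Q_def
    by (metis comp_apply surj_pair)
next
  fix p d d' assume a: "(p,d) \<in> EdgeStickers" "(p,d') \<in> EdgeStickers"
  obtain q e where 1: "g (p,d) = (q,e)" by (cases "g (p,d)") blast
  obtain q' e' where 2: "g (p,d') = (q',e')" by (cases "g (p,d')") blast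
  have "q = q'" using assms(2) a 1 2 unfolding Q_def by (metis fst_conv)
  moreover have "(q,e) \<in> EdgeStickers" "(q',e') \<in> EdgeStickers" using assms(2) a 1 2 unfolding Q_def by metis+
  ultimately have "fst (f (q,e)) = fst (f (q',e'))" using assms(1) unfolding Q_def by blast
  then show "fst ((f \<circ> g) (p,d)) = fst ((f \<circ> g) (p,d'))" using 1 2 by simp
qed

lemma Q_G3: "g \<in> G3 \<Longrightarrow> Q g"
proof (erule G3_ind)
  show "Q id" by (simp add: Q_def)
next
  fix g m assume "Q g" "m \<in> gens"
  then show "Q (m \<circ> g)" using Q_comp Q_gen by blast
qed

lemma ES_EdgePos: "(p,d) \<in> EdgeStickers \<Longrightarrow> p \<in> EdgePos"
  by (auto simp: EdgeStickers_def EdgePos_def)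

lemma EdgePos_ex: assumes "p \<in> EdgePos" shows "\<exists>d. (p,d) \<in> EdgeStickers"
proof -
  obtain x y z where p: "p = (x,y,z)" by (cases p) blast
  have P: "p \<in> Pos" "nz p = 2" using assms by (auto simp: EdgePos_def)
  have x: "x \<in> {-1,0,1}" and y: "y \<in> {-1,0,1}" and z: "z \<in> {-1,0,1}"
    using P(1) p by (auto simp: Pos_def)
  consider "x \<noteq> 0" | "x = 0" "y \<noteq> 0" | "x = 0" "y = 0" "z \<noteq> 0"
    using P(2) p by (cases "x = 0"; cases "y = 0"; cases "z = 0") auto
  then show ?thesis
  proof cases
    case 1
    then have "x = -1 \<or> x = 1" using x by auto
    then have "(p,(x,0,0)) \<in> EdgeStickers" using P p by (auto simp: EdgeStickers_def Axes_def)
    then show ?thesis by blast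
  next
    case 2
    then have "y = -1 \<or> y = 1" using y by auto
    then have "(p,(0,y,0)) \<in> EdgeStickers" using P p by (auto simp: EdgeStickers_def Axes_def)
    then show ?thesis by blast
  next
    case 3
    then have "z = -1 \<or> z = 1" using z by auto
    then have "(p,(0,0,z)) \<in> EdgeStickers" using P p by (auto simp: EdgeStickers_def Axes_def)
    then show ?thesis by blast
  qed
qed

lemma beta_eval: assumes "g \<in> G3" "(p,d) \<in> EdgeStickers" shows "beta g p = fst (g (p,d))"
proof -
  have 1: "(p, SOME d. (p,d) \<in> EdgeStickers) \<in> EdgeStickers" using assms(2) by (rule someI)
  show ?thesis using Q_G3[OF assms(1)] assms(2) 1 ES_EdgePos[OF assms(2)] unfolding beta_def Q_def by metis
qed

lemma beta_comp: assumes g: "g \<in> G3" and h: "h \<in> G3" shows "beta (g \<circ> h) = beta g \<circ> beta h"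
proof
  fix p
  show "beta (g \<circ> h) p = (beta g \<circ> beta h) p"
  proof (cases "p \<in> EdgePos")
    case True
    then obtain d where d: "(p,d) \<in> EdgeStickers" using EdgePos_ex by blast
    obtain q e where qe: "h (p,d) = (q,e)" by (cases "h (p,d)") blast
    have qeE: "(q,e) \<in> EdgeStickers" using Q_G3[OF h] d qe unfolding Q_def by metis
    have "beta (g \<circ> h) p = fst (g (q,e))" using beta_eval[OF G3_comp[OF g h] d] qe by simp
    also have "\<dots> = beta g q" using beta_eval[OF g qeE] by simp
    also have "q = beta h p" using beta_eval[OF h d] qe by simp
    finally show ?thesis by (simp add: comp_def)
  next
    case False
    then show ?thesis by (simp add: beta_def)
  qed
qed

lemma beta_id: "beta id = id"
  by (auto simp: beta_def fun_eq_iff)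

lemma G3_id: "id \<in> G3"
  unfolding G3_def by (rule gen_group.gen_id)

lemma ker_iff: "g \<in> kerPsi \<longleftrightarrow> g \<in> G3 \<and> (\<forall>s\<in>CornerStickers. g s = s)"
  by (auto simp: kerPsi_def psi_def fun_eq_iff)

lemma ker_comp: "g \<in> kerPsi \<Longrightarrow> h \<in> kerPsi \<Longrightarrow> g \<circ> h \<in> kerPsi"
  by (simp add: ker_iff G3_comp)

lemma H_comp: "x \<in> beta ` kerPsi \<Longrightarrow> y \<in> beta ` kerPsi \<Longrightarrow> x \<circ> y \<in> beta ` kerPsi"
proof -
  assume "x \<in> beta ` kerPsi" "y \<in> beta ` kerPsi"
  then obtain g h where "g \<in> kerPsi" "h \<in> kerPsi" "x = beta g" "y = beta h" by blast
  then show ?thesis using beta_comp ker_comp ker_iff by (metis image_eqI)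
qed

lemma H_id: "id \<in> beta ` kerPsi"
  using beta_id G3_id ker_iff by (metis id_apply image_eqI)

fun app :: "(sticker \<Rightarrow> sticker) list \<Rightarrow> sticker \<Rightarrow> sticker" where
  "app [] s = s"
| "app (m # ms) s = m (app ms s)"

lemma app_G3: "set ms \<subseteq> gens \<Longrightarrow> app ms \<in> G3"
proof (induction ms)
  case Nil then show ?case using G3_id by (simp add: id_def)
next
  case (Cons m ms)
  have "app (m # ms) = m \<circ> app ms" by (simp add: fun_eq_iff)
  have m: "m \<in> {u3, d3, f3, b3, l3, r3}" using Cons.prems gens_def by simp
  have "app ms \<in> gen_group {u3, d3, f3, b3, l3, r3}" using Cons unfolding G3_def by simp
  from gen_group.gen_mult[OF this m] have "m \<circ> app ms \<in> G3" unfolding G3_def .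
  then show ?case using \<open>app (m # ms) = m \<circ> app ms\<close> by metis
qed


lemma tab_u3 [simp]:
  "u3 ((-1, -1, -1), (-1, 0, 0)) = ((-1, -1, -1), (-1, 0, 0))"
  "u3 ((-1, -1, -1), (0, -1, 0)) = ((-1, -1, -1), (0, -1, 0))"
  "u3 ((-1, -1, -1), (0, 0, -1)) = ((-1, -1, -1), (0, 0, -1))"
  "u3 ((-1, -1, 1), (-1, 0, 0)) = ((-1, -1, 1), (-1, 0, 0))"
  "u3 ((-1, -1, 1), (0, -1, 0)) = ((-1, -1, 1), (0, -1, 0))"
  "u3 ((-1, -1, 1), (0, 0, 1)) = ((-1, -1, 1), (0, 0, 1))"
  "u3 ((-1, 1, -1), (-1, 0, 0)) = ((1, 1, -1), (0, 0, -1))"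
  "u3 ((-1, 1, -1), (0, 1, 0)) = ((1, 1, -1), (0, 1, 0))"
  "u3 ((-1, 1, -1), (0, 0, -1)) = ((1, 1, -1), (1, 0, 0))"
  "u3 ((-1, 1, 1), (-1, 0, 0)) = ((-1, 1, -1), (0, 0, -1))"
  "u3 ((-1, 1, 1), (0, 1, 0)) = ((-1, 1, -1), (0, 1, 0))"
  "u3 ((-1, 1, 1), (0, 0, 1)) = ((-1, 1, -1), (-1, 0, 0))"
  "u3 ((1, -1, -1), (1, 0, 0)) = ((1, -1, -1), (1, 0, 0))"
  "u3 ((1, -1, -1), (0, -1, 0)) = ((1, -1, -1), (0, -1, 0))"
  "u3 ((1, -1, -1), (0, 0, -1)) = ((1, -1, -1), (0, 0, -1))"
  "u3 ((1, -1, 1), (1, 0, 0)) = ((1, -1, 1), (1, 0, 0))"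
  "u3 ((1, -1, 1), (0, -1, 0)) = ((1, -1, 1), (0, -1, 0))"
  "u3 ((1, -1, 1), (0, 0, 1)) = ((1, -1, 1), (0, 0, 1))"
  "u3 ((1, 1, -1), (1, 0, 0)) = ((1, 1, 1), (0, 0, 1))"
  "u3 ((1, 1, -1), (0, 1, 0)) = ((1, 1, 1), (0, 1, 0))"
  "u3 ((1, 1, -1), (0, 0, -1)) = ((1, 1, 1), (1, 0, 0))"
  "u3 ((1, 1, 1), (1, 0, 0)) = ((-1, 1, 1), (0, 0, 1))"
  "u3 ((1, 1, 1), (0, 1, 0)) = ((-1, 1, 1), (0, 1, 0))"
  "u3 ((1, 1, 1), (0, 0, 1)) = ((-1, 1, 1), (-1, 0, 0))"
  "u3 ((-1, -1, 0), (-1, 0, 0)) = ((-1, -1, 0), (-1, 0, 0))"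
  "u3 ((-1, -1, 0), (0, -1, 0)) = ((-1, -1, 0), (0, -1, 0))"
  "u3 ((-1, 0, -1), (-1, 0, 0)) = ((-1, 0, -1), (-1, 0, 0))"
  "u3 ((-1, 0, -1), (0, 0, -1)) = ((-1, 0, -1), (0, 0, -1))"
  "u3 ((-1, 0, 1), (-1, 0, 0)) = ((-1, 0, 1), (-1, 0, 0))"
  "u3 ((-1, 0, 1), (0, 0, 1)) = ((-1, 0, 1), (0, 0, 1))"
  "u3 ((-1, 1, 0), (-1, 0, 0)) = ((0, 1, -1), (0, 0, -1))"
  "u3 ((-1, 1, 0), (0, 1, 0)) = ((0, 1, -1), (0, 1, 0))"
  "u3 ((0, -1, -1), (0, -1, 0)) = ((0, -1, -1), (0, -1, 0))"
  "u3 ((0, -1, -1), (0, 0, -1)) = ((0, -1, -1), (0, 0, -1))"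
  "u3 ((0, -1, 1), (0, -1, 0)) = ((0, -1, 1), (0, -1, 0))"
  "u3 ((0, -1, 1), (0, 0, 1)) = ((0, -1, 1), (0, 0, 1))"
  "u3 ((0, 1, -1), (0, 1, 0)) = ((1, 1, 0), (0, 1, 0))"
  "u3 ((0, 1, -1), (0, 0, -1)) = ((1, 1, 0), (1, 0, 0))"
  "u3 ((0, 1, 1), (0, 1, 0)) = ((-1, 1, 0), (0, 1, 0))"
  "u3 ((0, 1, 1), (0, 0, 1)) = ((-1, 1, 0), (-1, 0, 0))"
  "u3 ((1, -1, 0), (1, 0, 0)) = ((1, -1, 0), (1, 0, 0))"
  "u3 ((1, -1, 0), (0, -1, 0)) = ((1, -1, 0), (0, -1, 0))"
  "u3 ((1, 0, -1), (1, 0, 0)) = ((1, 0, -1), (1, 0, 0))"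
  "u3 ((1, 0, -1), (0, 0, -1)) = ((1, 0, -1), (0, 0, -1))"
  "u3 ((1, 0, 1), (1, 0, 0)) = ((1, 0, 1), (1, 0, 0))"
  "u3 ((1, 0, 1), (0, 0, 1)) = ((1, 0, 1), (0, 0, 1))"
  "u3 ((1, 1, 0), (1, 0, 0)) = ((0, 1, 1), (0, 0, 1))"
  "u3 ((1, 1, 0), (0, 1, 0)) = ((0, 1, 1), (0, 1, 0))"
  by (simp_all add: u3_def turn_def Stickers_def CornerStickers_def EdgeStickers_def Pos_def Axes_def rot_def nU_def)

lemma tab_d3 [simp]:
  "d3 ((-1, -1, -1), (-1, 0, 0)) = ((-1, -1, 1), (0, 0, 1))"
  "d3 ((-1, -1, -1), (0, -1, 0)) = ((-1, -1, 1), (0, -1, 0))"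
  "d3 ((-1, -1, -1), (0, 0, -1)) = ((-1, -1, 1), (-1, 0, 0))"
  "d3 ((-1, -1, 1), (-1, 0, 0)) = ((1, -1, 1), (0, 0, 1))"
  "d3 ((-1, -1, 1), (0, -1, 0)) = ((1, -1, 1), (0, -1, 0))"
  "d3 ((-1, -1, 1), (0, 0, 1)) = ((1, -1, 1), (1, 0, 0))"
  "d3 ((-1, 1, -1), (-1, 0, 0)) = ((-1, 1, -1), (-1, 0, 0))"
  "d3 ((-1, 1, -1), (0, 1, 0)) = ((-1, 1, -1), (0, 1, 0))"
  "d3 ((-1, 1, -1), (0, 0, -1)) = ((-1, 1, -1), (0, 0, -1))"
  "d3 ((-1, 1, 1), (-1, 0, 0)) = ((-1, 1, 1), (-1, 0, 0))"
  "d3 ((-1, 1, 1), (0, 1, 0)) = ((-1, 1, 1), (0, 1, 0))"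
  "d3 ((-1, 1, 1), (0, 0, 1)) = ((-1, 1, 1), (0, 0, 1))"
  "d3 ((1, -1, -1), (1, 0, 0)) = ((-1, -1, -1), (0, 0, -1))"
  "d3 ((1, -1, -1), (0, -1, 0)) = ((-1, -1, -1), (0, -1, 0))"
  "d3 ((1, -1, -1), (0, 0, -1)) = ((-1, -1, -1), (-1, 0, 0))"
  "d3 ((1, -1, 1), (1, 0, 0)) = ((1, -1, -1), (0, 0, -1))"
  "d3 ((1, -1, 1), (0, -1, 0)) = ((1, -1, -1), (0, -1, 0))"
  "d3 ((1, -1, 1), (0, 0, 1)) = ((1, -1, -1), (1, 0, 0))"
  "d3 ((1, 1, -1), (1, 0, 0)) = ((1, 1, -1), (1, 0, 0))"
  "d3 ((1, 1, -1), (0, 1, 0)) = ((1, 1, -1), (0, 1, 0))"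
  "d3 ((1, 1, -1), (0, 0, -1)) = ((1, 1, -1), (0, 0, -1))"
  "d3 ((1, 1, 1), (1, 0, 0)) = ((1, 1, 1), (1, 0, 0))"
  "d3 ((1, 1, 1), (0, 1, 0)) = ((1, 1, 1), (0, 1, 0))"
  "d3 ((1, 1, 1), (0, 0, 1)) = ((1, 1, 1), (0, 0, 1))"
  "d3 ((-1, -1, 0), (-1, 0, 0)) = ((0, -1, 1), (0, 0, 1))"
  "d3 ((-1, -1, 0), (0, -1, 0)) = ((0, -1, 1), (0, -1, 0))"
  "d3 ((-1, 0, -1), (-1, 0, 0)) = ((-1, 0, -1), (-1, 0, 0))"
  "d3 ((-1, 0, -1), (0, 0, -1)) = ((-1, 0, -1), (0, 0, -1))"
  "d3 ((-1, 0, 1), (-1, 0, 0)) = ((-1, 0, 1), (-1, 0, 0))"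
  "d3 ((-1, 0, 1), (0, 0, 1)) = ((-1, 0, 1), (0, 0, 1))"
  "d3 ((-1, 1, 0), (-1, 0, 0)) = ((-1, 1, 0), (-1, 0, 0))"
  "d3 ((-1, 1, 0), (0, 1, 0)) = ((-1, 1, 0), (0, 1, 0))"
  "d3 ((0, -1, -1), (0, -1, 0)) = ((-1, -1, 0), (0, -1, 0))"
  "d3 ((0, -1, -1), (0, 0, -1)) = ((-1, -1, 0), (-1, 0, 0))"
  "d3 ((0, -1, 1), (0, -1, 0)) = ((1, -1, 0), (0, -1, 0))"
  "d3 ((0, -1, 1), (0, 0, 1)) = ((1, -1, 0), (1, 0, 0))"
  "d3 ((0, 1, -1), (0, 1, 0)) = ((0, 1, -1), (0, 1, 0))"
  "d3 ((0, 1, -1), (0, 0, -1)) = ((0, 1, -1), (0, 0, -1))"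
  "d3 ((0, 1, 1), (0, 1, 0)) = ((0, 1, 1), (0, 1, 0))"
  "d3 ((0, 1, 1), (0, 0, 1)) = ((0, 1, 1), (0, 0, 1))"
  "d3 ((1, -1, 0), (1, 0, 0)) = ((0, -1, -1), (0, 0, -1))"
  "d3 ((1, -1, 0), (0, -1, 0)) = ((0, -1, -1), (0, -1, 0))"
  "d3 ((1, 0, -1), (1, 0, 0)) = ((1, 0, -1), (1, 0, 0))"
  "d3 ((1, 0, -1), (0, 0, -1)) = ((1, 0, -1), (0, 0, -1))"
  "d3 ((1, 0, 1), (1, 0, 0)) = ((1, 0, 1), (1, 0, 0))"
  "d3 ((1, 0, 1), (0, 0, 1)) = ((1, 0, 1), (0, 0, 1))"
  "d3 ((1, 1, 0), (1, 0, 0)) = ((1, 1, 0), (1, 0, 0))"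
  "d3 ((1, 1, 0), (0, 1, 0)) = ((1, 1, 0), (0, 1, 0))"
  by (simp_all add: d3_def turn_def Stickers_def CornerStickers_def EdgeStickers_def Pos_def Axes_def rot_def nD_def)

lemma tab_f3 [simp]:
  "f3 ((-1, -1, -1), (-1, 0, 0)) = ((-1, -1, -1), (-1, 0, 0))"
  "f3 ((-1, -1, -1), (0, -1, 0)) = ((-1, -1, -1), (0, -1, 0))"
  "f3 ((-1, -1, -1), (0, 0, -1)) = ((-1, -1, -1), (0, 0, -1))"
  "f3 ((-1, -1, 1), (-1, 0, 0)) = ((-1, 1, 1), (0, 1, 0))"
  "f3 ((-1, -1, 1), (0, -1, 0)) = ((-1, 1, 1), (-1, 0, 0))"
  "f3 ((-1, -1, 1), (0, 0, 1)) = ((-1, 1, 1), (0, 0, 1))"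
  "f3 ((-1, 1, -1), (-1, 0, 0)) = ((-1, 1, -1), (-1, 0, 0))"
  "f3 ((-1, 1, -1), (0, 1, 0)) = ((-1, 1, -1), (0, 1, 0))"
  "f3 ((-1, 1, -1), (0, 0, -1)) = ((-1, 1, -1), (0, 0, -1))"
  "f3 ((-1, 1, 1), (-1, 0, 0)) = ((1, 1, 1), (0, 1, 0))"
  "f3 ((-1, 1, 1), (0, 1, 0)) = ((1, 1, 1), (1, 0, 0))"
  "f3 ((-1, 1, 1), (0, 0, 1)) = ((1, 1, 1), (0, 0, 1))"
  "f3 ((1, -1, -1), (1, 0, 0)) = ((1, -1, -1), (1, 0, 0))"
  "f3 ((1, -1, -1), (0, -1, 0)) = ((1, -1, -1), (0, -1, 0))"
  "f3 ((1, -1, -1), (0, 0, -1)) = ((1, -1, -1), (0, 0, -1))"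
  "f3 ((1, -1, 1), (1, 0, 0)) = ((-1, -1, 1), (0, -1, 0))"
  "f3 ((1, -1, 1), (0, -1, 0)) = ((-1, -1, 1), (-1, 0, 0))"
  "f3 ((1, -1, 1), (0, 0, 1)) = ((-1, -1, 1), (0, 0, 1))"
  "f3 ((1, 1, -1), (1, 0, 0)) = ((1, 1, -1), (1, 0, 0))"
  "f3 ((1, 1, -1), (0, 1, 0)) = ((1, 1, -1), (0, 1, 0))"
  "f3 ((1, 1, -1), (0, 0, -1)) = ((1, 1, -1), (0, 0, -1))"
  "f3 ((1, 1, 1), (1, 0, 0)) = ((1, -1, 1), (0, -1, 0))"
  "f3 ((1, 1, 1), (0, 1, 0)) = ((1, -1, 1), (1, 0, 0))"
  "f3 ((1, 1, 1), (0, 0, 1)) = ((1, -1, 1), (0, 0, 1))"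
  "f3 ((-1, -1, 0), (-1, 0, 0)) = ((-1, -1, 0), (-1, 0, 0))"
  "f3 ((-1, -1, 0), (0, -1, 0)) = ((-1, -1, 0), (0, -1, 0))"
  "f3 ((-1, 0, -1), (-1, 0, 0)) = ((-1, 0, -1), (-1, 0, 0))"
  "f3 ((-1, 0, -1), (0, 0, -1)) = ((-1, 0, -1), (0, 0, -1))"
  "f3 ((-1, 0, 1), (-1, 0, 0)) = ((0, 1, 1), (0, 1, 0))"
  "f3 ((-1, 0, 1), (0, 0, 1)) = ((0, 1, 1), (0, 0, 1))"
  "f3 ((-1, 1, 0), (-1, 0, 0)) = ((-1, 1, 0), (-1, 0, 0))"
  "f3 ((-1, 1, 0), (0, 1, 0)) = ((-1, 1, 0), (0, 1, 0))"
  "f3 ((0, -1, -1), (0, -1, 0)) = ((0, -1, -1), (0, -1, 0))"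
  "f3 ((0, -1, -1), (0, 0, -1)) = ((0, -1, -1), (0, 0, -1))"
  "f3 ((0, -1, 1), (0, -1, 0)) = ((-1, 0, 1), (-1, 0, 0))"
  "f3 ((0, -1, 1), (0, 0, 1)) = ((-1, 0, 1), (0, 0, 1))"
  "f3 ((0, 1, -1), (0, 1, 0)) = ((0, 1, -1), (0, 1, 0))"
  "f3 ((0, 1, -1), (0, 0, -1)) = ((0, 1, -1), (0, 0, -1))"
  "f3 ((0, 1, 1), (0, 1, 0)) = ((1, 0, 1), (1, 0, 0))"
  "f3 ((0, 1, 1), (0, 0, 1)) = ((1, 0, 1), (0, 0, 1))"
  "f3 ((1, -1, 0), (1, 0, 0)) = ((1, -1, 0), (1, 0, 0))"
  "f3 ((1, -1, 0), (0, -1, 0)) = ((1, -1, 0), (0, -1, 0))"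
  "f3 ((1, 0, -1), (1, 0, 0)) = ((1, 0, -1), (1, 0, 0))"
  "f3 ((1, 0, -1), (0, 0, -1)) = ((1, 0, -1), (0, 0, -1))"
  "f3 ((1, 0, 1), (1, 0, 0)) = ((0, -1, 1), (0, -1, 0))"
  "f3 ((1, 0, 1), (0, 0, 1)) = ((0, -1, 1), (0, 0, 1))"
  "f3 ((1, 1, 0), (1, 0, 0)) = ((1, 1, 0), (1, 0, 0))"
  "f3 ((1, 1, 0), (0, 1, 0)) = ((1, 1, 0), (0, 1, 0))"
  by (simp_all add: f3_def turn_def Stickers_def CornerStickers_def EdgeStickers_def Pos_def Axes_def rot_def nF_def)

lemma tab_b3 [simp]:
  "b3 ((-1, -1, -1), (-1, 0, 0)) = ((1, -1, -1), (0, -1, 0))"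
  "b3 ((-1, -1, -1), (0, -1, 0)) = ((1, -1, -1), (1, 0, 0))"
  "b3 ((-1, -1, -1), (0, 0, -1)) = ((1, -1, -1), (0, 0, -1))"
  "b3 ((-1, -1, 1), (-1, 0, 0)) = ((-1, -1, 1), (-1, 0, 0))"
  "b3 ((-1, -1, 1), (0, -1, 0)) = ((-1, -1, 1), (0, -1, 0))"
  "b3 ((-1, -1, 1), (0, 0, 1)) = ((-1, -1, 1), (0, 0, 1))"
  "b3 ((-1, 1, -1), (-1, 0, 0)) = ((-1, -1, -1), (0, -1, 0))"
  "b3 ((-1, 1, -1), (0, 1, 0)) = ((-1, -1, -1), (-1, 0, 0))"
  "b3 ((-1, 1, -1), (0, 0, -1)) = ((-1, -1, -1), (0, 0, -1))"
  "b3 ((-1, 1, 1), (-1, 0, 0)) = ((-1, 1, 1), (-1, 0, 0))"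
  "b3 ((-1, 1, 1), (0, 1, 0)) = ((-1, 1, 1), (0, 1, 0))"
  "b3 ((-1, 1, 1), (0, 0, 1)) = ((-1, 1, 1), (0, 0, 1))"
  "b3 ((1, -1, -1), (1, 0, 0)) = ((1, 1, -1), (0, 1, 0))"
  "b3 ((1, -1, -1), (0, -1, 0)) = ((1, 1, -1), (1, 0, 0))"
  "b3 ((1, -1, -1), (0, 0, -1)) = ((1, 1, -1), (0, 0, -1))"
  "b3 ((1, -1, 1), (1, 0, 0)) = ((1, -1, 1), (1, 0, 0))"
  "b3 ((1, -1, 1), (0, -1, 0)) = ((1, -1, 1), (0, -1, 0))"
  "b3 ((1, -1, 1), (0, 0, 1)) = ((1, -1, 1), (0, 0, 1))"
  "b3 ((1, 1, -1), (1, 0, 0)) = ((-1, 1, -1), (0, 1, 0))"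
  "b3 ((1, 1, -1), (0, 1, 0)) = ((-1, 1, -1), (-1, 0, 0))"
  "b3 ((1, 1, -1), (0, 0, -1)) = ((-1, 1, -1), (0, 0, -1))"
  "b3 ((1, 1, 1), (1, 0, 0)) = ((1, 1, 1), (1, 0, 0))"
  "b3 ((1, 1, 1), (0, 1, 0)) = ((1, 1, 1), (0, 1, 0))"
  "b3 ((1, 1, 1), (0, 0, 1)) = ((1, 1, 1), (0, 0, 1))"
  "b3 ((-1, -1, 0), (-1, 0, 0)) = ((-1, -1, 0), (-1, 0, 0))"
  "b3 ((-1, -1, 0), (0, -1, 0)) = ((-1, -1, 0), (0, -1, 0))"
  "b3 ((-1, 0, -1), (-1, 0, 0)) = ((0, -1, -1), (0, -1, 0))"
  "b3 ((-1, 0, -1), (0, 0, -1)) = ((0, -1, -1), (0, 0, -1))"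
  "b3 ((-1, 0, 1), (-1, 0, 0)) = ((-1, 0, 1), (-1, 0, 0))"
  "b3 ((-1, 0, 1), (0, 0, 1)) = ((-1, 0, 1), (0, 0, 1))"
  "b3 ((-1, 1, 0), (-1, 0, 0)) = ((-1, 1, 0), (-1, 0, 0))"
  "b3 ((-1, 1, 0), (0, 1, 0)) = ((-1, 1, 0), (0, 1, 0))"
  "b3 ((0, -1, -1), (0, -1, 0)) = ((1, 0, -1), (1, 0, 0))"
  "b3 ((0, -1, -1), (0, 0, -1)) = ((1, 0, -1), (0, 0, -1))"
  "b3 ((0, -1, 1), (0, -1, 0)) = ((0, -1, 1), (0, -1, 0))"
  "b3 ((0, -1, 1), (0, 0, 1)) = ((0, -1, 1), (0, 0, 1))"
  "b3 ((0, 1, -1), (0, 1, 0)) = ((-1, 0, -1), (-1, 0, 0))"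
  "b3 ((0, 1, -1), (0, 0, -1)) = ((-1, 0, -1), (0, 0, -1))"
  "b3 ((0, 1, 1), (0, 1, 0)) = ((0, 1, 1), (0, 1, 0))"
  "b3 ((0, 1, 1), (0, 0, 1)) = ((0, 1, 1), (0, 0, 1))"
  "b3 ((1, -1, 0), (1, 0, 0)) = ((1, -1, 0), (1, 0, 0))"
  "b3 ((1, -1, 0), (0, -1, 0)) = ((1, -1, 0), (0, -1, 0))"
  "b3 ((1, 0, -1), (1, 0, 0)) = ((0, 1, -1), (0, 1, 0))"
  "b3 ((1, 0, -1), (0, 0, -1)) = ((0, 1, -1), (0, 0, -1))"
  "b3 ((1, 0, 1), (1, 0, 0)) = ((1, 0, 1), (1, 0, 0))"
  "b3 ((1, 0, 1), (0, 0, 1)) = ((1, 0, 1), (0, 0, 1))"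
  "b3 ((1, 1, 0), (1, 0, 0)) = ((1, 1, 0), (1, 0, 0))"
  "b3 ((1, 1, 0), (0, 1, 0)) = ((1, 1, 0), (0, 1, 0))"
  by (simp_all add: b3_def turn_def Stickers_def CornerStickers_def EdgeStickers_def Pos_def Axes_def rot_def nB_def)

lemma tab_l3 [simp]:
  "l3 ((-1, -1, -1), (-1, 0, 0)) = ((-1, 1, -1), (-1, 0, 0))"
  "l3 ((-1, -1, -1), (0, -1, 0)) = ((-1, 1, -1), (0, 0, -1))"
  "l3 ((-1, -1, -1), (0, 0, -1)) = ((-1, 1, -1), (0, 1, 0))"
  "l3 ((-1, -1, 1), (-1, 0, 0)) = ((-1, -1, -1), (-1, 0, 0))"
  "l3 ((-1, -1, 1), (0, -1, 0)) = ((-1, -1, -1), (0, 0, -1))"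
  "l3 ((-1, -1, 1), (0, 0, 1)) = ((-1, -1, -1), (0, -1, 0))"
  "l3 ((-1, 1, -1), (-1, 0, 0)) = ((-1, 1, 1), (-1, 0, 0))"
  "l3 ((-1, 1, -1), (0, 1, 0)) = ((-1, 1, 1), (0, 0, 1))"
  "l3 ((-1, 1, -1), (0, 0, -1)) = ((-1, 1, 1), (0, 1, 0))"
  "l3 ((-1, 1, 1), (-1, 0, 0)) = ((-1, -1, 1), (-1, 0, 0))"
  "l3 ((-1, 1, 1), (0, 1, 0)) = ((-1, -1, 1), (0, 0, 1))"
  "l3 ((-1, 1, 1), (0, 0, 1)) = ((-1, -1, 1), (0, -1, 0))"
  "l3 ((1, -1, -1), (1, 0, 0)) = ((1, -1, -1), (1, 0, 0))"
  "l3 ((1, -1, -1), (0, -1, 0)) = ((1, -1, -1), (0, -1, 0))"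
  "l3 ((1, -1, -1), (0, 0, -1)) = ((1, -1, -1), (0, 0, -1))"
  "l3 ((1, -1, 1), (1, 0, 0)) = ((1, -1, 1), (1, 0, 0))"
  "l3 ((1, -1, 1), (0, -1, 0)) = ((1, -1, 1), (0, -1, 0))"
  "l3 ((1, -1, 1), (0, 0, 1)) = ((1, -1, 1), (0, 0, 1))"
  "l3 ((1, 1, -1), (1, 0, 0)) = ((1, 1, -1), (1, 0, 0))"
  "l3 ((1, 1, -1), (0, 1, 0)) = ((1, 1, -1), (0, 1, 0))"
  "l3 ((1, 1, -1), (0, 0, -1)) = ((1, 1, -1), (0, 0, -1))"
  "l3 ((1, 1, 1), (1, 0, 0)) = ((1, 1, 1), (1, 0, 0))"
  "l3 ((1, 1, 1), (0, 1, 0)) = ((1, 1, 1), (0, 1, 0))"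
  "l3 ((1, 1, 1), (0, 0, 1)) = ((1, 1, 1), (0, 0, 1))"
  "l3 ((-1, -1, 0), (-1, 0, 0)) = ((-1, 0, -1), (-1, 0, 0))"
  "l3 ((-1, -1, 0), (0, -1, 0)) = ((-1, 0, -1), (0, 0, -1))"
  "l3 ((-1, 0, -1), (-1, 0, 0)) = ((-1, 1, 0), (-1, 0, 0))"
  "l3 ((-1, 0, -1), (0, 0, -1)) = ((-1, 1, 0), (0, 1, 0))"
  "l3 ((-1, 0, 1), (-1, 0, 0)) = ((-1, -1, 0), (-1, 0, 0))"
  "l3 ((-1, 0, 1), (0, 0, 1)) = ((-1, -1, 0), (0, -1, 0))"
  "l3 ((-1, 1, 0), (-1, 0, 0)) = ((-1, 0, 1), (-1, 0, 0))"
  "l3 ((-1, 1, 0), (0, 1, 0)) = ((-1, 0, 1), (0, 0, 1))"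
  "l3 ((0, -1, -1), (0, -1, 0)) = ((0, -1, -1), (0, -1, 0))"
  "l3 ((0, -1, -1), (0, 0, -1)) = ((0, -1, -1), (0, 0, -1))"
  "l3 ((0, -1, 1), (0, -1, 0)) = ((0, -1, 1), (0, -1, 0))"
  "l3 ((0, -1, 1), (0, 0, 1)) = ((0, -1, 1), (0, 0, 1))"
  "l3 ((0, 1, -1), (0, 1, 0)) = ((0, 1, -1), (0, 1, 0))"
  "l3 ((0, 1, -1), (0, 0, -1)) = ((0, 1, -1), (0, 0, -1))"
  "l3 ((0, 1, 1), (0, 1, 0)) = ((0, 1, 1), (0, 1, 0))"
  "l3 ((0, 1, 1), (0, 0, 1)) = ((0, 1, 1), (0, 0, 1))"
  "l3 ((1, -1, 0), (1, 0, 0)) = ((1, -1, 0), (1, 0, 0))"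
  "l3 ((1, -1, 0), (0, -1, 0)) = ((1, -1, 0), (0, -1, 0))"
  "l3 ((1, 0, -1), (1, 0, 0)) = ((1, 0, -1), (1, 0, 0))"
  "l3 ((1, 0, -1), (0, 0, -1)) = ((1, 0, -1), (0, 0, -1))"
  "l3 ((1, 0, 1), (1, 0, 0)) = ((1, 0, 1), (1, 0, 0))"
  "l3 ((1, 0, 1), (0, 0, 1)) = ((1, 0, 1), (0, 0, 1))"
  "l3 ((1, 1, 0), (1, 0, 0)) = ((1, 1, 0), (1, 0, 0))"
  "l3 ((1, 1, 0), (0, 1, 0)) = ((1, 1, 0), (0, 1, 0))"
  by (simp_all add: l3_def turn_def Stickers_def CornerStickers_def EdgeStickers_def Pos_def Axes_def rot_def nL_def)

lemma tab_r3 [simp]: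
  "r3 ((-1, -1, -1), (-1, 0, 0)) = ((-1, -1, -1), (-1, 0, 0))"
  "r3 ((-1, -1, -1), (0, -1, 0)) = ((-1, -1, -1), (0, -1, 0))"
  "r3 ((-1, -1, -1), (0, 0, -1)) = ((-1, -1, -1), (0, 0, -1))"
  "r3 ((-1, -1, 1), (-1, 0, 0)) = ((-1, -1, 1), (-1, 0, 0))"
  "r3 ((-1, -1, 1), (0, -1, 0)) = ((-1, -1, 1), (0, -1, 0))"
  "r3 ((-1, -1, 1), (0, 0, 1)) = ((-1, -1, 1), (0, 0, 1))"
  "r3 ((-1, 1, -1), (-1, 0, 0)) = ((-1, 1, -1), (-1, 0, 0))"
  "r3 ((-1, 1, -1), (0, 1, 0)) = ((-1, 1, -1), (0, 1, 0))"
  "r3 ((-1, 1, -1), (0, 0, -1)) = ((-1, 1, -1), (0, 0, -1))"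
  "r3 ((-1, 1, 1), (-1, 0, 0)) = ((-1, 1, 1), (-1, 0, 0))"
  "r3 ((-1, 1, 1), (0, 1, 0)) = ((-1, 1, 1), (0, 1, 0))"
  "r3 ((-1, 1, 1), (0, 0, 1)) = ((-1, 1, 1), (0, 0, 1))"
  "r3 ((1, -1, -1), (1, 0, 0)) = ((1, -1, 1), (1, 0, 0))"
  "r3 ((1, -1, -1), (0, -1, 0)) = ((1, -1, 1), (0, 0, 1))"
  "r3 ((1, -1, -1), (0, 0, -1)) = ((1, -1, 1), (0, -1, 0))"
  "r3 ((1, -1, 1), (1, 0, 0)) = ((1, 1, 1), (1, 0, 0))"
  "r3 ((1, -1, 1), (0, -1, 0)) = ((1, 1, 1), (0, 0, 1))"
  "r3 ((1, -1, 1), (0, 0, 1)) = ((1, 1, 1), (0, 1, 0))"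
  "r3 ((1, 1, -1), (1, 0, 0)) = ((1, -1, -1), (1, 0, 0))"
  "r3 ((1, 1, -1), (0, 1, 0)) = ((1, -1, -1), (0, 0, -1))"
  "r3 ((1, 1, -1), (0, 0, -1)) = ((1, -1, -1), (0, -1, 0))"
  "r3 ((1, 1, 1), (1, 0, 0)) = ((1, 1, -1), (1, 0, 0))"
  "r3 ((1, 1, 1), (0, 1, 0)) = ((1, 1, -1), (0, 0, -1))"
  "r3 ((1, 1, 1), (0, 0, 1)) = ((1, 1, -1), (0, 1, 0))"
  "r3 ((-1, -1, 0), (-1, 0, 0)) = ((-1, -1, 0), (-1, 0, 0))"
  "r3 ((-1, -1, 0), (0, -1, 0)) = ((-1, -1, 0), (0, -1, 0))"
  "r3 ((-1, 0, -1), (-1, 0, 0)) = ((-1, 0, -1), (-1, 0, 0))"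
  "r3 ((-1, 0, -1), (0, 0, -1)) = ((-1, 0, -1), (0, 0, -1))"
  "r3 ((-1, 0, 1), (-1, 0, 0)) = ((-1, 0, 1), (-1, 0, 0))"
  "r3 ((-1, 0, 1), (0, 0, 1)) = ((-1, 0, 1), (0, 0, 1))"
  "r3 ((-1, 1, 0), (-1, 0, 0)) = ((-1, 1, 0), (-1, 0, 0))"
  "r3 ((-1, 1, 0), (0, 1, 0)) = ((-1, 1, 0), (0, 1, 0))"
  "r3 ((0, -1, -1), (0, -1, 0)) = ((0, -1, -1), (0, -1, 0))"
  "r3 ((0, -1, -1), (0, 0, -1)) = ((0, -1, -1), (0, 0, -1))"
  "r3 ((0, -1, 1), (0, -1, 0)) = ((0, -1, 1), (0, -1, 0))"
  "r3 ((0, -1, 1), (0, 0, 1)) = ((0, -1, 1), (0, 0, 1))"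
  "r3 ((0, 1, -1), (0, 1, 0)) = ((0, 1, -1), (0, 1, 0))"
  "r3 ((0, 1, -1), (0, 0, -1)) = ((0, 1, -1), (0, 0, -1))"
  "r3 ((0, 1, 1), (0, 1, 0)) = ((0, 1, 1), (0, 1, 0))"
  "r3 ((0, 1, 1), (0, 0, 1)) = ((0, 1, 1), (0, 0, 1))"
  "r3 ((1, -1, 0), (1, 0, 0)) = ((1, 0, 1), (1, 0, 0))"
  "r3 ((1, -1, 0), (0, -1, 0)) = ((1, 0, 1), (0, 0, 1))"
  "r3 ((1, 0, -1), (1, 0, 0)) = ((1, -1, 0), (1, 0, 0))"
  "r3 ((1, 0, -1), (0, 0, -1)) = ((1, -1, 0), (0, -1, 0))"
  "r3 ((1, 0, 1), (1, 0, 0)) = ((1, 1, 0), (1, 0, 0))"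
  "r3 ((1, 0, 1), (0, 0, 1)) = ((1, 1, 0), (0, 1, 0))"
  "r3 ((1, 1, 0), (1, 0, 0)) = ((1, 0, -1), (1, 0, 0))"
  "r3 ((1, 1, 0), (0, 1, 0)) = ((1, 0, -1), (0, 0, -1))"
  by (simp_all add: r3_def turn_def Stickers_def CornerStickers_def EdgeStickers_def Pos_def Axes_def rot_def nR_def)

definition CL :: "sticker list" where "CL = [((-1, -1, -1), (-1, 0, 0)), ((-1, -1, -1), (0, -1, 0)), ((-1, -1, -1), (0, 0, -1)), ((-1, -1, 1), (-1, 0, 0)), ((-1, -1, 1), (0, -1, 0)), ((-1, -1, 1), (0, 0, 1)), ((-1, 1, -1), (-1, 0, 0)), ((-1, 1, -1), (0, 1, 0)), ((-1, 1, -1), (0, 0, -1)), ((-1, 1, 1), (-1, 0, 0)), ((-1, 1, 1), (0, 1, 0)), ((-1, 1, 1), (0, 0, 1)), ((1, -1, -1), (1, 0, 0)), ((1, -1, -1), (0, -1, 0)), ((1, -1, -1), (0, 0, -1)), ((1, -1, 1), (1, 0, 0)), ((1, -1, 1), (0, -1, 0)), ((1, -1, 1), (0, 0, 1)), ((1, 1, -1), (1, 0, 0)), ((1, 1, -1), (0, 1, 0)), ((1, 1, -1), (0, 0, -1)), ((1, 1, 1), (1, 0, 0)), ((1, 1, 1), (0, 1, 0)), ((1, 1, 1), (0, 0, 1))]"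

definition EL :: "sticker list" where "EL = [((-1, -1, 0), (-1, 0, 0)), ((-1, 0, -1), (-1, 0, 0)), ((-1, 0, 1), (-1, 0, 0)), ((-1, 1, 0), (-1, 0, 0)), ((0, -1, -1), (0, -1, 0)), ((0, -1, 1), (0, -1, 0)), ((0, 1, -1), (0, 1, 0)), ((0, 1, 1), (0, 1, 0)), ((1, -1, 0), (1, 0, 0)), ((1, 0, -1), (1, 0, 0)), ((1, 0, 1), (1, 0, 0)), ((1, 1, 0), (1, 0, 0))]"

definition EPL :: "vec list" where "EPL = [(-1, -1, 0), (-1, 0, -1), (-1, 0, 1), (-1, 1, 0), (0, -1, -1), (0, -1, 1), (0, 1, -1), (0, 1, 1), (1, -1, 0), (1, 0, -1), (1, 0, 1), (1, 1, 0)]"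


lemma CS_CL: assumes "s \<in> CornerStickers" shows "s \<in> set CL"
proof -
  obtain x y z d where s: "s = ((x,y,z),d)" by (cases s) auto
  have P: "(x,y,z) \<in> Pos" "nz (x,y,z) = 3" "d \<in> Axes" "dot (x,y,z) d = 1"
    using assms s by (auto simp: CornerStickers_def)
  have x: "x \<in> {-1,1}" and y: "y \<in> {-1,1}" and z: "z \<in> {-1,1}"
    using P(1,2) by (auto simp: Pos_def split: if_splits)
  have d: "d \<in> {(1,0,0), (-1,0,0), (0,1,0), (0,-1,0), (0,0,1), (0,0,-1)}" using P(3) by (simp add: Axes_def)
  show ?thesis using x y z d P(4) unfolding s CL_def
    by (elim insertE emptyE) simp_all
qed

lemma EP_EPL: assumes "p \<in> EdgePos" shows "p \<in> set EPL"
proof -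
  obtain x y z where s: "p = (x,y,z)" by (cases p) auto
  have P: "(x,y,z) \<in> Pos" "nz (x,y,z) = 2"
    using assms s by (auto simp: EdgePos_def)
  have x: "x \<in> {-1,0,1}" and y: "y \<in> {-1,0,1}" and z: "z \<in> {-1,0,1}"
    using P(1) by (auto simp: Pos_def)
  show ?thesis using x y z P(2) unfolding s EPL_def
    by (elim insertE emptyE) simp_all
qed

lemma EPL_EL: assumes "p \<in> set EPL" shows "\<exists>d. (p,d) \<in> set EL"
proof -
  have "map fst EL = EPL" by (simp add: EL_def EPL_def)
  then have "p \<in> fst ` set EL" using assms by (metis list.set_map)
  then show ?thesis by force
qed

lemma EL_ES_all: "list_all (\<lambda>s. s \<in> EdgeStickers) EL"
  by (simp add: EL_def EdgeStickers_def Pos_def Axes_def)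

lemma EL_ES: "s \<in> set EL \<Longrightarrow> s \<in> EdgeStickers"
  using EL_ES_all by (simp add: list_all_iff)

lemma EPL_EP_all: "list_all (\<lambda>p. p \<in> EdgePos) EPL"
  by (simp add: EPL_def EdgePos_def Pos_def)

lemma EPL_EP: "p \<in> set EPL \<Longrightarrow> p \<in> EdgePos"
  using EPL_EP_all by (simp add: list_all_iff)

lemma word_lemma:
  assumes w: "set w \<subseteq> gens" and c: "list_all (\<lambda>s. app w s = s) CL"
    and e: "list_all (\<lambda>(p,d). fst (app w (p,d)) = cyc3 a b k p) EL"
    and abk: "{a,b,k} \<subseteq> set EPL"
  shows "cyc3 a b k \<in> beta ` kerPsi"
proof -
  have G: "app w \<in> G3" using app_G3[OF w] .
  have K: "app w \<in> kerPsi" using G c CS_CL by (auto simp: ker_iff list_all_iff)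
  have "beta (app w) = cyc3 a b k"
  proof
    fix p
    show "beta (app w) p = cyc3 a b k p"
    proof (cases "p \<in> EdgePos")
      case True
      then obtain d where d: "(p,d) \<in> set EL" using EP_EPL EPL_EL by blast
      have "beta (app w) p = fst (app w (p,d))" using beta_eval[OF G EL_ES[OF d]] .
      also have "\<dots> = cyc3 a b k p" using e d by (auto simp: list_all_iff)
      finally show ?thesis .
    next
      case False
      have "a \<in> EdgePos" "b \<in> EdgePos" "k \<in> EdgePos" using abk by (auto intro!: EPL_EP)
      then have "p \<noteq> a" "p \<noteq> b" "p \<noteq> k" using False by auto
      then show ?thesis using False by (simp add: beta_def cyc3_def)
    qed
  qed
  then show ?thesis using K by (metis image_eqI)
qed

lemma word0: "cyc3 (0, 1, 1) (1, 1, 0) (-1, 1, 0) \<in> beta ` kerPsi"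
  by (rule word_lemma[where w = "[r3, r3, u3, u3, u3, r3, r3, r3, u3, u3, u3, r3, u3, r3, u3, r3, u3, u3, u3, r3]"]) (simp_all add: gens_def CL_def EL_def EPL_def cyc3_def)

lemma word1: "cyc3 (0, 1, 1) (1, 1, 0) (0, 1, -1) \<in> beta ` kerPsi"
  by (rule word_lemma[where w = "[u3, u3, u3, r3, r3, u3, u3, u3, r3, r3, r3, u3, u3, u3, r3, u3, r3, u3, r3, u3, u3, u3, r3, u3]"]) (simp_all add: gens_def CL_def EL_def EPL_def cyc3_def)

lemma word2: "cyc3 (0, 1, 1) (1, 1, 0) (-1, 0, 1) \<in> beta ` kerPsi"
  by (rule word_lemma[where w = "[l3, r3, r3, u3, u3, u3, r3, r3, r3, u3, u3, u3, r3, u3, r3, u3, r3, u3, u3, u3, r3, l3, l3, l3]"]) (simp_all add: gens_def CL_def EL_def EPL_def cyc3_def)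

lemma word3: "cyc3 (0, 1, 1) (1, 1, 0) (-1, -1, 0) \<in> beta ` kerPsi"
  by (rule word_lemma[where w = "[l3, l3, r3, r3, u3, u3, u3, r3, r3, r3, u3, u3, u3, r3, u3, r3, u3, r3, u3, u3, u3, r3, l3, l3]"]) (simp_all add: gens_def CL_def EL_def EPL_def cyc3_def)

lemma word4: "cyc3 (0, 1, 1) (1, 1, 0) (-1, 0, -1) \<in> beta ` kerPsi"
  by (rule word_lemma[where w = "[l3, l3, l3, r3, r3, u3, u3, u3, r3, r3, r3, u3, u3, u3, r3, u3, r3, u3, r3, u3, u3, u3, r3, l3]"]) (simp_all add: gens_def CL_def EL_def EPL_def cyc3_def)

lemma word5: "cyc3 (0, 1, 1) (1, 1, 0) (1, 0, -1) \<in> beta ` kerPsi"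
  by (rule word_lemma[where w = "[r3, f3, l3, r3, r3, u3, u3, u3, r3, r3, r3, u3, u3, u3, r3, u3, r3, u3, r3, u3, u3, u3, r3, l3, l3, l3, f3, f3, f3, r3, r3, r3]"]) (simp_all add: gens_def CL_def EL_def EPL_def cyc3_def)

lemma word6: "cyc3 (0, 1, 1) (1, 1, 0) (1, -1, 0) \<in> beta ` kerPsi"
  by (rule word_lemma[where w = "[d3, d3, l3, l3, r3, r3, u3, u3, u3, r3, r3, r3, u3, u3, u3, r3, u3, r3, u3, r3, u3, u3, u3, r3, l3, l3, d3, d3]"]) (simp_all add: gens_def CL_def EL_def EPL_def cyc3_def)

lemma word7: "cyc3 (0, 1, 1) (1, 0, 1) (1, 1, 0) \<in> beta ` kerPsi"
  by (rule word_lemma[where w = "[f3, l3, r3, r3, u3, u3, u3, r3, r3, r3, u3, u3, u3, r3, u3, r3, u3, r3, u3, u3, u3, r3, l3, l3, l3, f3, f3, f3]"]) (simp_all add: gens_def CL_def EL_def EPL_def cyc3_def)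

lemma word8: "cyc3 (0, 1, 1) (1, 1, 0) (0, -1, 1) \<in> beta ` kerPsi"
  by (rule word_lemma[where w = "[d3, l3, l3, r3, r3, u3, u3, u3, r3, r3, r3, u3, u3, u3, r3, u3, r3, u3, r3, u3, u3, u3, r3, l3, l3, d3, d3, d3]"]) (simp_all add: gens_def CL_def EL_def EPL_def cyc3_def)

lemma word9: "cyc3 (0, 1, 1) (1, 1, 0) (0, -1, -1) \<in> beta ` kerPsi"
  by (rule word_lemma[where w = "[b3, l3, l3, l3, r3, r3, u3, u3, u3, r3, r3, r3, u3, u3, u3, r3, u3, r3, u3, r3, u3, u3, u3, r3, l3, b3, b3, b3]"]) (simp_all add: gens_def CL_def EL_def EPL_def cyc3_def)



theorem proposition3p2:
  shows "A12 \<subseteq> beta ` kerPsi"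
proof
  fix \<sigma> assume "\<sigma> \<in> A12"
  then have perm: "\<sigma> permutes EdgePos" and ev: "evenperm \<sigma>" by (auto simp: A12_def)
  have fin: "finite EdgePos" using EP_EPL by (meson finite_set finite_subset subsetI)
  have w7': "cyc3 (0,1,1) (1,1,0) (1,0,1) \<in> beta ` kerPsi"
  proof -
    have "cyc3 (0::int,1::int,1::int) (1,1,0) (1,0,1) = cyc3 (0,1,1) (1,0,1) (1,1,0) \<circ> cyc3 (0,1,1) (1,0,1) (1,1,0)"
      by (rule cyc3_sq) simp
    then show ?thesis using H_comp[OF word7 word7] by simp
  qed
  have all: "list_all (\<lambda>k. k \<noteq> (0,1,1) \<longrightarrow> k \<noteq> (1,1,0) \<longrightarrow> cyc3 (0,1,1) (1,1,0) k \<in> beta ` kerPsi) EPL"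
    by (simp add: EPL_def word0 word1 word2 word3 word4 word5 word6 w7' word8 word9)
  have fam: "cyc3 (0,1,1) (1,1,0) k \<in> beta ` kerPsi"
    if "k \<in> EdgePos" "k \<noteq> (0,1,1)" "k \<noteq> (1,1,0)" for k
    using all EP_EPL[OF that(1)] that(2,3) by (simp add: list_all_iff)
  have abE: "(0,1,1) \<in> EdgePos" "(1,1,0) \<in> EdgePos" by (auto simp: EdgePos_def Pos_def)
  have c3: "cyc3 x y z \<in> beta ` kerPsi" if "distinct [x,y,z]" "{x,y,z} \<subseteq> EdgePos" for x y z
    by (rule all_c3[OF H_comp _ abE fam that]) simp_all
  show "\<sigma> \<in> beta ` kerPsi"
    by (rule alt_gen[OF fin H_comp H_id c3 perm ev])
qed


end
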